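(* Let $\Lambda$ be a left-artinian ring, $\mathcal{C}=\mathrm{mod}(\Lambda)$, let $\beta$ be a radical and $\alpha$ a pre-radical on $\mathcal{C}$. If $\mathcal{F}_\alpha\subseteq\mathcal{T}_\beta$, then for every $M\in\mathcal{C}$ we have $\mathrm{soc}(q_\beta(M))\in\mathcal{T}_\alpha\cap\mathcal{F}_\beta$.
   Context: $\mathcal{C}$ is the category of finitely generated left $\Lambda$-modules. A pre-radical is an additive subfunctor $\alpha$ of the identity functor; for it, $q_\alpha:=\mathrm{Id}/\alpha$, so $q_\alpha(M)=M/\alpha(M)$. A radical is a pre-radical $\beta$ with $\beta\circ q_\beta=0$. $\mathcal{F}_\alpha=\{M:\alpha(M)=0\}$, $\mathcal{T}_\alpha=\{M:\alpha(M)=M\}$. *)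

theory Defs
  imports "HOL-Algebra.Module"
begin

text \<open>HOL-Algebra's module locale requires a commutative ring, so we define
left modules over an arbitrary ring directly, reusing the module record.\<close>

definition lmodule :: "('a, 'r) ring_scheme \<Rightarrow> ('a, 'm) module \<Rightarrow> bool" where
  "lmodule R M \<longleftrightarrow> ring R \<and> abelian_group M \<and>
     (\<forall>a\<in>carrier R. \<forall>x\<in>carrier M. a \<odot>\<^bsub>M\<^esub> x \<in> carrier M) \<and>
     (\<forall>a\<in>carrier R. \<forall>b\<in>carrier R. \<forall>x\<in>carrier M.
        (a \<oplus>\<^bsub>R\<^esub> b) \<odot>\<^bsub>M\<^esub> x = a \<odot>\<^bsub>M\<^esub> x \<oplus>\<^bsub>M\<^esub> b \<odot>\<^bsub>M\<^esub> x) \<and>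
     (\<forall>a\<in>carrier R. \<forall>x\<in>carrier M. \<forall>y\<in>carrier M.
        a \<odot>\<^bsub>M\<^esub> (x \<oplus>\<^bsub>M\<^esub> y) = a \<odot>\<^bsub>M\<^esub> x \<oplus>\<^bsub>M\<^esub> a \<odot>\<^bsub>M\<^esub> y) \<and>
     (\<forall>a\<in>carrier R. \<forall>b\<in>carrier R. \<forall>x\<in>carrier M.
        (a \<otimes>\<^bsub>R\<^esub> b) \<odot>\<^bsub>M\<^esub> x = a \<odot>\<^bsub>M\<^esub> (b \<odot>\<^bsub>M\<^esub> x)) \<and>
     (\<forall>x\<in>carrier M. \<one>\<^bsub>R\<^esub> \<odot>\<^bsub>M\<^esub> x = x)"

text \<open>Submodules: HOL-Algebra's \<open>submodule N R M\<close> (additive subgroup closed under scalars).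
 A submodule N of M, viewed as a module, is \<open>M\<lparr>carrier := N\<rparr>\<close>.\<close>

definition fg_module :: "('a, 'r) ring_scheme \<Rightarrow> ('a, 'm) module \<Rightarrow> bool" where
  "fg_module R M \<longleftrightarrow> lmodule R M \<and>
     (\<exists>A. finite A \<and> A \<subseteq> carrier M \<and>
        (\<forall>N. submodule N R M \<and> A \<subseteq> N \<longrightarrow> N = carrier M))"

definition lmod_hom :: "('a, 'r) ring_scheme \<Rightarrow> ('a, 'm) module \<Rightarrow> ('a, 'm) module \<Rightarrow> ('m \<Rightarrow> 'm) set" where
  "lmod_hom R M N = {f. f \<in> carrier M \<rightarrow> carrier N \<and>
     (\<forall>x\<in>carrier M. \<forall>y\<in>carrier M. f (x \<oplus>\<^bsub>M\<^esub> y) = f x \<oplus>\<^bsub>N\<^esub> f y) \<and>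
     (\<forall>a\<in>carrier R. \<forall>x\<in>carrier M. f (a \<odot>\<^bsub>M\<^esub> x) = a \<odot>\<^bsub>N\<^esub> f x)}"

definition simple_module :: "('a, 'r) ring_scheme \<Rightarrow> ('a, 'm) module \<Rightarrow> bool" where
  "simple_module R M \<longleftrightarrow> lmodule R M \<and> carrier M \<noteq> {\<zero>\<^bsub>M\<^esub>} \<and>
     (\<forall>N. submodule N R M \<longrightarrow> N = {\<zero>\<^bsub>M\<^esub>} \<or> N = carrier M)"

definition soc :: "('a, 'r) ring_scheme \<Rightarrow> ('a, 'm) module \<Rightarrow> 'm set" where
  "soc R M = \<Inter>{N. submodule N R M \<and>
      (\<forall>S. submodule S R M \<and> simple_module R (M\<lparr>carrier := S\<rparr>) \<longrightarrow> S \<subseteq> N)}"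

definition left_ideal :: "('a, 'r) ring_scheme \<Rightarrow> 'a set \<Rightarrow> bool" where
  "left_ideal R I \<longleftrightarrow> subgroup I (add_monoid R) \<and>
     (\<forall>r\<in>carrier R. \<forall>x\<in>I. r \<otimes>\<^bsub>R\<^esub> x \<in> I)"

definition left_artinian :: "('a, 'r) ring_scheme \<Rightarrow> bool" where
  "left_artinian R \<longleftrightarrow> ring R \<and>
     \<not> (\<exists>I :: nat \<Rightarrow> 'a set. (\<forall>n. left_ideal R (I n)) \<and> (\<forall>n. I (Suc n) \<subset> I n))"

text \<open>A pre-radical: a subfunctor of the identity functor on the category of finitely
 generated left R-modules (with carriers in the type 'm). Additivity is automatic for
 subfunctors of the identity (morphisms act by restriction).\<close>
definition preradical :: "('a, 'r) ring_scheme \<Rightarrow> (('a, 'm) module \<Rightarrow> 'm set) \<Rightarrow> bool" where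
  "preradical R \<alpha> \<longleftrightarrow>
     (\<forall>M. fg_module R M \<longrightarrow> submodule (\<alpha> M) R M) \<and>
     (\<forall>M N f. fg_module R M \<and> fg_module R N \<and> f \<in> lmod_hom R M N \<longrightarrow> f ` \<alpha> M \<subseteq> \<alpha> N)"

text \<open>\<open>is_quotient_by R M K N p\<close>: N together with the surjection p : M \<rightarrow> N with kernel K
 represents the quotient module M/K (determined up to isomorphism).\<close>
definition is_quotient_by :: "('a, 'r) ring_scheme \<Rightarrow> ('a, 'm) module \<Rightarrow> 'm set \<Rightarrow>
    ('a, 'm) module \<Rightarrow> ('m \<Rightarrow> 'm) \<Rightarrow> bool" where
  "is_quotient_by R M K N p \<longleftrightarrow> fg_module R N \<and> p \<in> lmod_hom R M N \<and>
     p ` carrier M = carrier N \<and> {x \<in> carrier M. p x = \<zero>\<^bsub>N\<^esub>} = K"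

text \<open>A radical: a pre-radical \<beta> with \<beta>(q_\<beta>(M)) = 0 for all M, where q_\<beta>(M) = M/\<beta>(M).\<close>
definition radical :: "('a, 'r) ring_scheme \<Rightarrow> (('a, 'm) module \<Rightarrow> 'm set) \<Rightarrow> bool" where
  "radical R \<beta> \<longleftrightarrow> preradical R \<beta> \<and>
     (\<forall>M N p. fg_module R M \<and> is_quotient_by R M (\<beta> M) N p \<longrightarrow> \<beta> N = {\<zero>\<^bsub>N\<^esub>})"

definition torsionfree_class :: "('a, 'r) ring_scheme \<Rightarrow> (('a, 'm) module \<Rightarrow> 'm set) \<Rightarrow> ('a, 'm) module set" where
  "torsionfree_class R \<alpha> = {M. fg_module R M \<and> \<alpha> M = {\<zero>\<^bsub>M\<^esub>}}"

definition torsion_class :: "('a, 'r) ring_scheme \<Rightarrow> (('a, 'm) module \<Rightarrow> 'm set) \<Rightarrow> ('a, 'm) module set" where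
  "torsion_class R \<alpha> = {M. fg_module R M \<and> \<alpha> M = carrier M}"

end

theory Submission
  imports Defs
begin

lemma lmod_ag: "lmodule R M \<Longrightarrow> abelian_group M" by (simp add: lmodule_def)
lemma lmod_ring: "lmodule R M \<Longrightarrow> ring R" by (simp add: lmodule_def)

lemma smult_closed': "lmodule R M \<Longrightarrow> a \<in> carrier R \<Longrightarrow> x \<in> carrier M \<Longrightarrow> a \<odot>\<^bsub>M\<^esub> x \<in> carrier M"
  by (simp add: lmodule_def)
lemma smult_ldistr: "lmodule R M \<Longrightarrow> a \<in> carrier R \<Longrightarrow> b \<in> carrier R \<Longrightarrow> x \<in> carrier M \<Longrightarrow>
   (a \<oplus>\<^bsub>R\<^esub> b) \<odot>\<^bsub>M\<^esub> x = a \<odot>\<^bsub>M\<^esub> x \<oplus>\<^bsub>M\<^esub> b \<odot>\<^bsub>M\<^esub> x"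
  by (simp add: lmodule_def)
lemma smult_rdistr: "lmodule R M \<Longrightarrow> a \<in> carrier R \<Longrightarrow> x \<in> carrier M \<Longrightarrow> y \<in> carrier M \<Longrightarrow>
   a \<odot>\<^bsub>M\<^esub> (x \<oplus>\<^bsub>M\<^esub> y) = a \<odot>\<^bsub>M\<^esub> x \<oplus>\<^bsub>M\<^esub> a \<odot>\<^bsub>M\<^esub> y"
  by (simp add: lmodule_def)
lemma smult_assoc: "lmodule R M \<Longrightarrow> a \<in> carrier R \<Longrightarrow> b \<in> carrier R \<Longrightarrow> x \<in> carrier M \<Longrightarrow>
   (a \<otimes>\<^bsub>R\<^esub> b) \<odot>\<^bsub>M\<^esub> x = a \<odot>\<^bsub>M\<^esub> (b \<odot>\<^bsub>M\<^esub> x)"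
  by (simp add: lmodule_def)
lemma smult_one: "lmodule R M \<Longrightarrow> x \<in> carrier M \<Longrightarrow> \<one>\<^bsub>R\<^esub> \<odot>\<^bsub>M\<^esub> x = x"
  by (simp add: lmodule_def)

lemma smult_zero_l: assumes "lmodule R M" "x \<in> carrier M" shows "\<zero>\<^bsub>R\<^esub> \<odot>\<^bsub>M\<^esub> x = \<zero>\<^bsub>M\<^esub>"
proof -
  interpret R: ring R using lmod_ring[OF assms(1)] .
  interpret M: abelian_group M using lmod_ag[OF assms(1)] .
  have c: "\<zero>\<^bsub>R\<^esub> \<odot>\<^bsub>M\<^esub> x \<in> carrier M" using smult_closed'[OF assms(1)] assms by simp
  have "\<zero>\<^bsub>R\<^esub> \<odot>\<^bsub>M\<^esub> x = \<zero>\<^bsub>R\<^esub> \<odot>\<^bsub>M\<^esub> x \<oplus>\<^bsub>M\<^esub> \<zero>\<^bsub>R\<^esub> \<odot>\<^bsub>M\<^esub> x"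
    using smult_ldistr[OF assms(1), of "\<zero>\<^bsub>R\<^esub>" "\<zero>\<^bsub>R\<^esub>" x] assms by simp
  thus ?thesis using c by (metis M.add.l_cancel_one)
qed

lemma smult_zero_r: assumes "lmodule R M" "a \<in> carrier R" shows "a \<odot>\<^bsub>M\<^esub> \<zero>\<^bsub>M\<^esub> = \<zero>\<^bsub>M\<^esub>"
proof -
  interpret R: ring R using lmod_ring[OF assms(1)] .
  interpret M: abelian_group M using lmod_ag[OF assms(1)] .
  have c: "a \<odot>\<^bsub>M\<^esub> \<zero>\<^bsub>M\<^esub> \<in> carrier M" using smult_closed'[OF assms(1)] assms by simp
  have "a \<odot>\<^bsub>M\<^esub> \<zero>\<^bsub>M\<^esub> = a \<odot>\<^bsub>M\<^esub> \<zero>\<^bsub>M\<^esub> \<oplus>\<^bsub>M\<^esub> a \<odot>\<^bsub>M\<^esub> \<zero>\<^bsub>M\<^esub>"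
    using smult_rdistr[OF assms(1), of a "\<zero>\<^bsub>M\<^esub>" "\<zero>\<^bsub>M\<^esub>"] assms by simp
  thus ?thesis using c by (metis M.add.l_cancel_one)
qed

lemma smult_neg: assumes "lmodule R M" "a \<in> carrier R" "x \<in> carrier M"
  shows "(\<ominus>\<^bsub>R\<^esub> a) \<odot>\<^bsub>M\<^esub> x = \<ominus>\<^bsub>M\<^esub> (a \<odot>\<^bsub>M\<^esub> x)"
proof -
  interpret R: ring R using lmod_ring[OF assms(1)] .
  interpret M: abelian_group M using lmod_ag[OF assms(1)] .
  have "(\<ominus>\<^bsub>R\<^esub> a) \<odot>\<^bsub>M\<^esub> x \<oplus>\<^bsub>M\<^esub> a \<odot>\<^bsub>M\<^esub> x = \<zero>\<^bsub>M\<^esub>"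
    using smult_ldistr[OF assms(1), of "\<ominus>\<^bsub>R\<^esub> a" a x] assms smult_zero_l[OF assms(1,3)] by (simp add: R.l_neg)
  thus ?thesis using assms smult_closed'[OF assms(1)] by (metis M.minus_equality R.a_inv_closed)
qed

lemma submodule_iff:
  assumes "lmodule R M"
  shows "submodule H R M \<longleftrightarrow> H \<subseteq> carrier M \<and> \<zero>\<^bsub>M\<^esub> \<in> H \<and>
     (\<forall>a\<in>H. \<forall>b\<in>H. a \<oplus>\<^bsub>M\<^esub> b \<in> H) \<and> (\<forall>r\<in>carrier R. \<forall>x\<in>H. r \<odot>\<^bsub>M\<^esub> x \<in> H)"
proof -
  interpret R: ring R using lmod_ring[OF assms(1)] .
  interpret M: abelian_group M using lmod_ag[OF assms(1)] .
  show ?thesis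
  proof
    assume "submodule H R M"
    then show "H \<subseteq> carrier M \<and> \<zero>\<^bsub>M\<^esub> \<in> H \<and>
     (\<forall>a\<in>H. \<forall>b\<in>H. a \<oplus>\<^bsub>M\<^esub> b \<in> H) \<and> (\<forall>r\<in>carrier R. \<forall>x\<in>H. r \<odot>\<^bsub>M\<^esub> x \<in> H)"
      unfolding submodule_def submodule_axioms_def subgroup_def by auto
  next
    assume h: "H \<subseteq> carrier M \<and> \<zero>\<^bsub>M\<^esub> \<in> H \<and>
     (\<forall>a\<in>H. \<forall>b\<in>H. a \<oplus>\<^bsub>M\<^esub> b \<in> H) \<and> (\<forall>r\<in>carrier R. \<forall>x\<in>H. r \<odot>\<^bsub>M\<^esub> x \<in> H)"
    have "\<And>x. x \<in> H \<Longrightarrow> \<ominus>\<^bsub>M\<^esub> x \<in> H"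
    proof -
      fix x assume x: "x \<in> H"
      have "(\<ominus>\<^bsub>R\<^esub> \<one>\<^bsub>R\<^esub>) \<odot>\<^bsub>M\<^esub> x \<in> H" using h x by auto
      moreover have "(\<ominus>\<^bsub>R\<^esub> \<one>\<^bsub>R\<^esub>) \<odot>\<^bsub>M\<^esub> x = \<ominus>\<^bsub>M\<^esub> x"
        using smult_neg[OF assms, of "\<one>\<^bsub>R\<^esub>" x] smult_one[OF assms, of x] h x by auto
      ultimately show "\<ominus>\<^bsub>M\<^esub> x \<in> H" by simp
    qed
    then show "submodule H R M"
      unfolding submodule_def submodule_axioms_def subgroup_def using h by (auto simp: a_inv_def)
  qed
qed

lemma lmodule_restrict:
  assumes "lmodule R M" "submodule H R M"
  shows "lmodule R (M\<lparr>carrier := H\<rparr>)"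
proof -
  interpret MM: abelian_group M using lmod_ag[OF assms(1)] .
  have sg: "subgroup H (add_monoid M)" by (rule submodule.axioms(1)[OF assms(2)])
  have am: "abelian_monoid (M\<lparr>carrier := H\<rparr>)"
    using MM.a_comm_group comm_monoid.submonoid_is_comm_monoid[OF _ subgroup.subgroup_is_submonoid[OF sg]]
    unfolding abelian_monoid_def comm_group_def by auto
  have ag: "abelian_group (M\<lparr>carrier := H\<rparr>)"
    apply (rule abelian_group.intro[OF am])
    using subgroup.subgroup_is_group[OF sg] MM.a_comm_group am
    unfolding abelian_group_axioms_def comm_group_def abelian_monoid_def by auto
  have X: "H \<subseteq> carrier M \<and> \<zero>\<^bsub>M\<^esub> \<in> H \<and>
     (\<forall>a\<in>H. \<forall>b\<in>H. a \<oplus>\<^bsub>M\<^esub> b \<in> H) \<and> (\<forall>r\<in>carrier R. \<forall>x\<in>H. r \<odot>\<^bsub>M\<^esub> x \<in> H)"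
    using submodule_iff[OF assms(1)] assms(2) by simp
  have L: "lmodule R M" by fact
  have sub: "H \<subseteq> carrier M" using X by blast
  show ?thesis unfolding lmodule_def
  proof (intro conjI)
    show "ring R" using lmod_ring[OF L] .
    show "abelian_group (M\<lparr>carrier := H\<rparr>)" by (rule ag)
  qed (use X sub L in \<open>auto simp: lmodule_def subset_iff\<close>)
qed


lemma sub_elim:
  assumes "lmodule R M" "submodule H R M"
  shows "H \<subseteq> carrier M" "\<zero>\<^bsub>M\<^esub> \<in> H" "\<And>a b. a \<in> H \<Longrightarrow> b \<in> H \<Longrightarrow> a \<oplus>\<^bsub>M\<^esub> b \<in> H"
    "\<And>r x. r \<in> carrier R \<Longrightarrow> x \<in> H \<Longrightarrow> r \<odot>\<^bsub>M\<^esub> x \<in> H"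
  using submodule_iff[OF assms(1)] assms(2) by simp_all

lemma sub_intro:
  assumes "lmodule R M" "H \<subseteq> carrier M" "\<zero>\<^bsub>M\<^esub> \<in> H" "\<And>a b. a \<in> H \<Longrightarrow> b \<in> H \<Longrightarrow> a \<oplus>\<^bsub>M\<^esub> b \<in> H"
    "\<And>r x. r \<in> carrier R \<Longrightarrow> x \<in> H \<Longrightarrow> r \<odot>\<^bsub>M\<^esub> x \<in> H"
  shows "submodule H R M"
  using submodule_iff[OF assms(1)] assms(2-) by simp

lemma sub_carrier: assumes "lmodule R M" shows "submodule (carrier M) R M"
proof -
  interpret MM: abelian_group M using lmod_ag[OF assms(1)] .
  show ?thesis apply (rule sub_intro[OF assms]) using smult_closed'[OF assms] by auto
qed

lemma sub_zero: assumes "lmodule R M" shows "submodule {\<zero>\<^bsub>M\<^esub>} R M"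
proof -
  interpret MM: abelian_group M using lmod_ag[OF assms(1)] .
  show ?thesis apply (rule sub_intro[OF assms]) using smult_zero_r[OF assms] by auto
qed

lemma sub_Inter:
  assumes "lmodule R M" "F \<noteq> {}" "\<And>H. H \<in> F \<Longrightarrow> submodule H R M"
  shows "submodule (\<Inter>F) R M"
proof (rule sub_intro[OF assms(1)])
  show "\<Inter>F \<subseteq> carrier M" using assms sub_elim(1)[OF assms(1)] by blast
  show "\<zero>\<^bsub>M\<^esub> \<in> \<Inter>F" using assms sub_elim(2)[OF assms(1)] by blast
  show "\<And>a b. a \<in> \<Inter>F \<Longrightarrow> b \<in> \<Inter>F \<Longrightarrow> a \<oplus>\<^bsub>M\<^esub> b \<in> \<Inter>F" using assms sub_elim(3)[OF assms(1)] by blast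
  show "\<And>r x. r \<in> carrier R \<Longrightarrow> x \<in> \<Inter>F \<Longrightarrow> r \<odot>\<^bsub>M\<^esub> x \<in> \<Inter>F" using assms sub_elim(4)[OF assms(1)] by blast
qed

definition span :: "('a, 'r) ring_scheme \<Rightarrow> ('a, 'm) module \<Rightarrow> 'm set \<Rightarrow> 'm set" where
  "span R M A = \<Inter>{H. submodule H R M \<and> A \<subseteq> H}"

lemma span_sub: assumes "lmodule R M" "A \<subseteq> carrier M" shows "submodule (span R M A) R M"
  unfolding span_def apply (rule sub_Inter[OF assms(1)]) using sub_carrier[OF assms(1)] assms(2) by auto

lemma span_inc: "A \<subseteq> span R M A" unfolding span_def by blast

lemma span_least: "submodule H R M \<Longrightarrow> A \<subseteq> H \<Longrightarrow> span R M A \<subseteq> H" unfolding span_def by blast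

lemma span_mono: "A \<subseteq> B \<Longrightarrow> span R M A \<subseteq> span R M B" unfolding span_def by blast

lemma span_empty: assumes "lmodule R M" shows "span R M {} = {\<zero>\<^bsub>M\<^esub>}"
proof
  show "span R M {} \<subseteq> {\<zero>\<^bsub>M\<^esub>}" using span_least[OF sub_zero[OF assms]] by blast
  show "{\<zero>\<^bsub>M\<^esub>} \<subseteq> span R M {}" using sub_elim(2)[OF assms span_sub[OF assms]] by simp
qed

lemma span_carrier: "lmodule R M \<Longrightarrow> A \<subseteq> carrier M \<Longrightarrow> span R M A \<subseteq> carrier M"
  using sub_elim(1) span_sub by blast

lemma sub_restrict_iff:
  assumes "lmodule R M" "submodule X R M"
  shows "submodule Y R (M\<lparr>carrier := X\<rparr>) \<longleftrightarrow> submodule Y R M \<and> Y \<subseteq> X"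
proof -
  have L: "lmodule R (M\<lparr>carrier := X\<rparr>)" by (rule lmodule_restrict[OF assms])
  have "X \<subseteq> carrier M" using sub_elim(1)[OF assms] .
  then show ?thesis unfolding submodule_iff[OF L] submodule_iff[OF assms(1)] by auto
qed

lemma span_insert:
  assumes L: "lmodule R M" and a: "a \<in> carrier M" and B: "B \<subseteq> carrier M"
  shows "span R M (insert a B) = {r \<odot>\<^bsub>M\<^esub> a \<oplus>\<^bsub>M\<^esub> y | r y. r \<in> carrier R \<and> y \<in> span R M B}"
    (is "_ = ?P")
proof -
  interpret R: ring R using lmod_ring[OF L] .
  interpret MM: abelian_group M using lmod_ag[OF L] .
  have SB: "span R M B \<subseteq> carrier M" using span_carrier[OF L B] .
  have sP: "submodule ?P R M"
  proof (rule sub_intro[OF L])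
    show "?P \<subseteq> carrier M" using SB a smult_closed'[OF L] by blast
    show "\<zero>\<^bsub>M\<^esub> \<in> ?P"
      using smult_zero_l[OF L a] sub_elim(2)[OF L span_sub[OF L B]] by force
    show "p \<oplus>\<^bsub>M\<^esub> q \<in> ?P" if hp: "p \<in> ?P" "q \<in> ?P" for p q
    proof -
      obtain r y where ry: "p = r \<odot>\<^bsub>M\<^esub> a \<oplus>\<^bsub>M\<^esub> y" "r \<in> carrier R" "y \<in> span R M B" using hp(1) by blast
      obtain s z where sz: "q = s \<odot>\<^bsub>M\<^esub> a \<oplus>\<^bsub>M\<^esub> z" "s \<in> carrier R" "z \<in> span R M B" using hp(2) by blast
      have yz: "y \<oplus>\<^bsub>M\<^esub> z \<in> span R M B" using sub_elim(3)[OF L span_sub[OF L B]] ry sz by blast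
      have "p \<oplus>\<^bsub>M\<^esub> q = (r \<oplus>\<^bsub>R\<^esub> s) \<odot>\<^bsub>M\<^esub> a \<oplus>\<^bsub>M\<^esub> (y \<oplus>\<^bsub>M\<^esub> z)"
      proof -
        have c: "y \<in> carrier M" "z \<in> carrier M" "r \<odot>\<^bsub>M\<^esub> a \<in> carrier M" "s \<odot>\<^bsub>M\<^esub> a \<in> carrier M"
          using ry sz SB a smult_closed'[OF L] by auto
        show ?thesis using ry sz a smult_ldistr[OF L] c by (simp add: MM.a_ac)
      qed
      then show ?thesis using yz ry sz by blast
    qed
    show "t \<odot>\<^bsub>M\<^esub> p \<in> ?P" if ht: "t \<in> carrier R" "p \<in> ?P" for t p
    proof -
      obtain r y where ry: "p = r \<odot>\<^bsub>M\<^esub> a \<oplus>\<^bsub>M\<^esub> y" "r \<in> carrier R" "y \<in> span R M B" using ht(2) by blast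
      have ty: "t \<odot>\<^bsub>M\<^esub> y \<in> span R M B" using sub_elim(4)[OF L span_sub[OF L B]] ry ht by blast
      have "t \<odot>\<^bsub>M\<^esub> p = (t \<otimes>\<^bsub>R\<^esub> r) \<odot>\<^bsub>M\<^esub> a \<oplus>\<^bsub>M\<^esub> t \<odot>\<^bsub>M\<^esub> y"
        using ry(1-3) ht(1) SB a smult_closed'[OF L] smult_rdistr[OF L] smult_assoc[OF L] by auto
      then show ?thesis using ty ry ht by blast
    qed
  qed
  have memP: "\<And>x. x \<in> ?P \<longleftrightarrow> (\<exists>r\<in>carrier R. \<exists>y\<in>span R M B. x = r \<odot>\<^bsub>M\<^esub> a \<oplus>\<^bsub>M\<^esub> y)"
    by blast
  have S: "submodule (span R M (insert a B)) R M" using span_sub[OF L] a B by simp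
  have z: "\<zero>\<^bsub>M\<^esub> \<in> span R M B" using sub_elim(2)[OF L span_sub[OF L B]] .
  show ?thesis
  proof
    have "a \<in> ?P"
    proof -
      have "a = \<one>\<^bsub>R\<^esub> \<odot>\<^bsub>M\<^esub> a \<oplus>\<^bsub>M\<^esub> \<zero>\<^bsub>M\<^esub>" using smult_one[OF L a] a by simp
      then show ?thesis unfolding memP using z R.one_closed by (intro bexI)
    qed
    moreover have "B \<subseteq> ?P"
    proof
      fix b assume b: "b \<in> B"
      have "b = \<zero>\<^bsub>R\<^esub> \<odot>\<^bsub>M\<^esub> a \<oplus>\<^bsub>M\<^esub> b" using smult_zero_l[OF L a] b B by auto
      moreover have "b \<in> span R M B" using b span_inc[of B R M] by blast
      ultimately show "b \<in> ?P" unfolding memP using R.zero_closed by (intro bexI)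
    qed
    ultimately have "insert a B \<subseteq> ?P" by simp
    then show "span R M (insert a B) \<subseteq> ?P" by (rule span_least[OF sP])
    show "?P \<subseteq> span R M (insert a B)"
    proof
      fix p assume "p \<in> ?P"
      then obtain r y where ry: "p = r \<odot>\<^bsub>M\<^esub> a \<oplus>\<^bsub>M\<^esub> y" "r \<in> carrier R" "y \<in> span R M B" unfolding memP by blast
      have "a \<in> span R M (insert a B)" using span_inc[of "insert a B" R M] by simp
      then have "r \<odot>\<^bsub>M\<^esub> a \<in> span R M (insert a B)" using sub_elim(4)[OF L S] ry(2) by simp
      moreover have "y \<in> span R M (insert a B)" using ry(3) span_mono[of B "insert a B" R M] by auto
      ultimately show "p \<in> span R M (insert a B)" using sub_elim(3)[OF L S] ry(1) by simp
    qed
  qed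
qed

lemma fg_of_span:
  assumes L: "lmodule R M" and "finite A" "A \<subseteq> carrier M"
  shows "fg_module R (M\<lparr>carrier := span R M A\<rparr>)"
proof -
  have S: "submodule (span R M A) R M" using span_sub[OF L assms(3)] .
  have "\<forall>N. submodule N R (M\<lparr>carrier := span R M A\<rparr>) \<and> A \<subseteq> N \<longrightarrow> N = carrier (M\<lparr>carrier := span R M A\<rparr>)"
  proof (intro allI impI)
    fix N assume N: "submodule N R (M\<lparr>carrier := span R M A\<rparr>) \<and> A \<subseteq> N"
    then have "submodule N R M" "N \<subseteq> span R M A" using sub_restrict_iff[OF L S] by auto
    then show "N = carrier (M\<lparr>carrier := span R M A\<rparr>)" using span_least[of N R M A] N by auto
  qed
  moreover have "A \<subseteq> carrier (M\<lparr>carrier := span R M A\<rparr>)" using span_inc by simp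
  ultimately show ?thesis unfolding fg_module_def using lmodule_restrict[OF L S] assms(2) by blast
qed

lemma fg_span:
  assumes "fg_module R M"
  shows "\<exists>A. finite A \<and> A \<subseteq> carrier M \<and> span R M A = carrier M"
proof -
  have L: "lmodule R M" using assms unfolding fg_module_def by simp
  obtain A where A: "finite A" "A \<subseteq> carrier M" "\<forall>N. submodule N R M \<and> A \<subseteq> N \<longrightarrow> N = carrier M"
    using assms unfolding fg_module_def by blast
  have "span R M A = carrier M" using A(3) span_sub[OF L A(2)] span_inc[of A R M] by blast
  then show ?thesis using A by blast
qed


lemma sub_neg: assumes L: "lmodule R M" and H: "submodule H R M" and x: "x \<in> H"
  shows "\<ominus>\<^bsub>M\<^esub> x \<in> H"
proof -
  interpret R: ring R using lmod_ring[OF L] .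
  have xc: "x \<in> carrier M" using sub_elim(1)[OF L H] x by blast
  have "(\<ominus>\<^bsub>R\<^esub> \<one>\<^bsub>R\<^esub>) \<odot>\<^bsub>M\<^esub> x \<in> H" using sub_elim(4)[OF L H] x by simp
  moreover have "(\<ominus>\<^bsub>R\<^esub> \<one>\<^bsub>R\<^esub>) \<odot>\<^bsub>M\<^esub> x = \<ominus>\<^bsub>M\<^esub> x"
    using smult_neg[OF L, of "\<one>\<^bsub>R\<^esub>" x] smult_one[OF L xc] xc by simp
  ultimately show ?thesis by simp
qed

definition subrel :: "('a, 'r) ring_scheme \<Rightarrow> ('a, 'm) module \<Rightarrow> 'm set \<Rightarrow> ('m set \<times> 'm set) set" where
  "subrel R M B = {(X,Y). submodule X R M \<and> submodule Y R M \<and> X \<subset> Y \<and> Y \<subseteq> B}"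

definition idrel :: "('a, 'r) ring_scheme \<Rightarrow> ('a set \<times> 'a set) set" where
  "idrel R = {(I,J). left_ideal R I \<and> left_ideal R J \<and> I \<subset> J}"

lemma wf_idrel: assumes "left_artinian R" shows "wf (idrel R)"
proof -
  have "\<not> (\<exists>f. \<forall>i. (f (Suc i), f i) \<in> idrel R)"
  proof
    assume "\<exists>f. \<forall>i. (f (Suc i), f i) \<in> idrel R"
    then obtain f where f: "\<forall>i. (f (Suc i), f i) \<in> idrel R" by blast
    then have "(\<forall>n. left_ideal R (f n)) \<and> (\<forall>n. f (Suc n) \<subset> f n)" unfolding idrel_def by auto
    then show False using assms unfolding left_artinian_def by blast
  qed
  then show ?thesis using wf_iff_no_infinite_down_chain by blast
qed

lemma idl_left_ideal:
  assumes L: "lmodule R M" and a: "a \<in> carrier M" and B: "B \<subseteq> carrier M" and X: "submodule X R M"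
  shows "left_ideal R {r \<in> carrier R. \<exists>y\<in>span R M B. r \<odot>\<^bsub>M\<^esub> a \<oplus>\<^bsub>M\<^esub> y \<in> X}" (is "left_ideal R ?I")
proof -
  interpret R: ring R using lmod_ring[OF L] .
  interpret MM: abelian_group M using lmod_ag[OF L] .
  have SB: "submodule (span R M B) R M" using span_sub[OF L B] .
  have SBc: "span R M B \<subseteq> carrier M" using span_carrier[OF L B] .
  have sm: "\<And>r. r \<in> carrier R \<Longrightarrow> r \<odot>\<^bsub>M\<^esub> a \<in> carrier M" using smult_closed'[OF L] a by blast
  have add: "r \<oplus>\<^bsub>R\<^esub> s \<in> ?I" if h: "r \<in> ?I" "s \<in> ?I" for r s
  proof -
    obtain y where y: "r \<in> carrier R" "y \<in> span R M B" "r \<odot>\<^bsub>M\<^esub> a \<oplus>\<^bsub>M\<^esub> y \<in> X" using h(1) by blast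
    obtain z where z: "s \<in> carrier R" "z \<in> span R M B" "s \<odot>\<^bsub>M\<^esub> a \<oplus>\<^bsub>M\<^esub> z \<in> X" using h(2) by blast
    have yc: "y \<in> carrier M" "z \<in> carrier M" using y z SBc by auto
    have eq: "(r \<oplus>\<^bsub>R\<^esub> s) \<odot>\<^bsub>M\<^esub> a \<oplus>\<^bsub>M\<^esub> (y \<oplus>\<^bsub>M\<^esub> z) = (r \<odot>\<^bsub>M\<^esub> a \<oplus>\<^bsub>M\<^esub> y) \<oplus>\<^bsub>M\<^esub> (s \<odot>\<^bsub>M\<^esub> a \<oplus>\<^bsub>M\<^esub> z)"
      using smult_ldistr[OF L y(1) z(1) a] sm[OF y(1)] sm[OF z(1)] yc by (simp add: MM.a_ac)
    have "(r \<oplus>\<^bsub>R\<^esub> s) \<odot>\<^bsub>M\<^esub> a \<oplus>\<^bsub>M\<^esub> (y \<oplus>\<^bsub>M\<^esub> z) \<in> X" unfolding eq using sub_elim(3)[OF L X] y z by blast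
    moreover have "y \<oplus>\<^bsub>M\<^esub> z \<in> span R M B" using sub_elim(3)[OF L SB] y z by blast
    ultimately show ?thesis using y z by blast
  qed
  have zero: "\<zero>\<^bsub>R\<^esub> \<in> ?I"
  proof -
    have "\<zero>\<^bsub>R\<^esub> \<odot>\<^bsub>M\<^esub> a \<oplus>\<^bsub>M\<^esub> \<zero>\<^bsub>M\<^esub> = \<zero>\<^bsub>M\<^esub>" using smult_zero_l[OF L a] by simp
    then show ?thesis using sub_elim(2)[OF L X] sub_elim(2)[OF L SB] by force
  qed
  have neg: "\<ominus>\<^bsub>R\<^esub> r \<in> ?I" if h: "r \<in> ?I" for r
  proof -
    obtain y where y: "r \<in> carrier R" "y \<in> span R M B" "r \<odot>\<^bsub>M\<^esub> a \<oplus>\<^bsub>M\<^esub> y \<in> X" using h(1) by blast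
    have yc: "y \<in> carrier M" using y SBc by auto
    have eq: "(\<ominus>\<^bsub>R\<^esub> r) \<odot>\<^bsub>M\<^esub> a \<oplus>\<^bsub>M\<^esub> (\<ominus>\<^bsub>M\<^esub> y) = \<ominus>\<^bsub>M\<^esub> (r \<odot>\<^bsub>M\<^esub> a \<oplus>\<^bsub>M\<^esub> y)"
      using smult_neg[OF L y(1) a] sm[OF y(1)] yc by (simp add: MM.minus_add)
    have "(\<ominus>\<^bsub>R\<^esub> r) \<odot>\<^bsub>M\<^esub> a \<oplus>\<^bsub>M\<^esub> (\<ominus>\<^bsub>M\<^esub> y) \<in> X" unfolding eq using sub_neg[OF L X y(3)] .
    moreover have "\<ominus>\<^bsub>M\<^esub> y \<in> span R M B" using sub_neg[OF L SB y(2)] .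
    ultimately show ?thesis using y by blast
  qed
  have mul: "t \<otimes>\<^bsub>R\<^esub> r \<in> ?I" if h: "t \<in> carrier R" "r \<in> ?I" for t r
  proof -
    obtain y where y: "r \<in> carrier R" "y \<in> span R M B" "r \<odot>\<^bsub>M\<^esub> a \<oplus>\<^bsub>M\<^esub> y \<in> X" using h(2) by blast
    have yc: "y \<in> carrier M" using y SBc by auto
    have eq: "(t \<otimes>\<^bsub>R\<^esub> r) \<odot>\<^bsub>M\<^esub> a \<oplus>\<^bsub>M\<^esub> (t \<odot>\<^bsub>M\<^esub> y) = t \<odot>\<^bsub>M\<^esub> (r \<odot>\<^bsub>M\<^esub> a \<oplus>\<^bsub>M\<^esub> y)"
      using smult_assoc[OF L h(1) y(1) a] smult_rdistr[OF L h(1) sm[OF y(1)] yc] by simp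
    have "(t \<otimes>\<^bsub>R\<^esub> r) \<odot>\<^bsub>M\<^esub> a \<oplus>\<^bsub>M\<^esub> (t \<odot>\<^bsub>M\<^esub> y) \<in> X" unfolding eq using sub_elim(4)[OF L X h(1) y(3)] .
    moreover have "t \<odot>\<^bsub>M\<^esub> y \<in> span R M B" using sub_elim(4)[OF L SB h(1) y(2)] .
    ultimately show ?thesis using y h(1) by blast
  qed
  have "subgroup ?I (add_monoid R)"
    unfolding subgroup_def using add zero neg by (auto simp: a_inv_def[symmetric])
  then show ?thesis unfolding left_ideal_def using mul by blast
qed


lemma sub_Int: assumes L: "lmodule R M" "submodule X R M" "submodule Y R M" shows "submodule (X \<inter> Y) R M"
  using sub_Inter[OF L(1), of "{X,Y}"] L by auto

lemma art_step:
  assumes A: "left_artinian R" and L: "lmodule R M" and a: "a \<in> carrier M" and B: "B \<subseteq> carrier M"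
    and W: "wf (subrel R M (span R M B))"
  shows "wf (subrel R M (span R M (insert a B)))"
proof -
  interpret R: ring R using lmod_ring[OF L] .
  interpret MM: abelian_group M using lmod_ag[OF L] .
  define sB where "sB = span R M B"
  have SB: "submodule sB R M" unfolding sB_def using span_sub[OF L B] .
  have SBc: "sB \<subseteq> carrier M" unfolding sB_def using span_carrier[OF L B] .
  define idl where "idl X = {r \<in> carrier R. \<exists>y\<in>sB. r \<odot>\<^bsub>M\<^esub> a \<oplus>\<^bsub>M\<^esub> y \<in> X}" for X
  define f where "f X = (idl X, X \<inter> sB)" for X
  have sm: "\<And>r. r \<in> carrier R \<Longrightarrow> r \<odot>\<^bsub>M\<^esub> a \<in> carrier M" using smult_closed'[OF L] a by blast
  have sub: "subrel R M (span R M (insert a B)) \<subseteq> inv_image (idrel R <*lex*> subrel R M sB) f"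
  proof
    fix p assume "p \<in> subrel R M (span R M (insert a B))"
    then obtain X Y where p: "p = (X,Y)" and X: "submodule X R M" and Y: "submodule Y R M"
      and XY: "X \<subset> Y" and Ysp: "Y \<subseteq> span R M (insert a B)" unfolding subrel_def by blast
    have iX: "left_ideal R (idl X)" unfolding idl_def sB_def by (rule idl_left_ideal[OF L a B X])
    have iY: "left_ideal R (idl Y)" unfolding idl_def sB_def by (rule idl_left_ideal[OF L a B Y])
    have i1: "idl X \<subseteq> idl Y" unfolding idl_def using XY by blast
    have i2: "X \<inter> sB \<subseteq> Y \<inter> sB" using XY by blast
    have key: "X \<inter> sB = Y \<inter> sB \<Longrightarrow> idl X = idl Y \<Longrightarrow> False"
    proof -
      assume e1: "X \<inter> sB = Y \<inter> sB" and e2: "idl X = idl Y"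
      have "Y \<subseteq> X"
      proof
        fix y assume y: "y \<in> Y"
        then have "y \<in> span R M (insert a B)" using Ysp by blast
        then obtain r z where rz: "r \<in> carrier R" "z \<in> sB" "y = r \<odot>\<^bsub>M\<^esub> a \<oplus>\<^bsub>M\<^esub> z"
          unfolding span_insert[OF L a B] sB_def by blast
        have "r \<in> idl Y" unfolding idl_def using rz y by blast
        then have "r \<in> idl X" using e2 by simp
        then obtain z' where z': "z' \<in> sB" "r \<odot>\<^bsub>M\<^esub> a \<oplus>\<^bsub>M\<^esub> z' \<in> X" unfolding idl_def by blast
        define w where "w = r \<odot>\<^bsub>M\<^esub> a \<oplus>\<^bsub>M\<^esub> z'"
        define d where "d = z \<oplus>\<^bsub>M\<^esub> \<ominus>\<^bsub>M\<^esub> z'"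
        have zc: "z \<in> carrier M" "z' \<in> carrier M" using rz z' SBc by auto
        have wY: "w \<in> Y" using z' XY w_def by blast
        have dB: "d \<in> sB" unfolding d_def using sub_elim(3)[OF L SB] sub_neg[OF L SB] rz z' by blast
        have dyw: "d = y \<oplus>\<^bsub>M\<^esub> \<ominus>\<^bsub>M\<^esub> w" unfolding d_def w_def rz(3)
          using sm[OF rz(1)] zc by (simp add: MM.minus_add MM.a_ac MM.r_neg1 MM.r_neg2 MM.r_neg)
        then have "d \<in> Y" using sub_elim(3)[OF L Y] sub_neg[OF L Y] y wY by simp
        then have "d \<in> X" using dB e1 by blast
        moreover have "y = d \<oplus>\<^bsub>M\<^esub> w"
        proof -
          have wc: "w \<in> carrier M" "y \<in> carrier M" unfolding w_def rz(3) using sm[OF rz(1)] zc by auto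
          show ?thesis unfolding dyw using wc by (simp add: MM.a_assoc MM.l_neg)
        qed
        ultimately show "y \<in> X" using sub_elim(3)[OF L X] z' w_def by simp
      qed
      then show False using XY by blast
    qed
    show "p \<in> inv_image (idrel R <*lex*> subrel R M sB) f"
    proof (cases "idl X = idl Y")
      case False
      then have "(idl X, idl Y) \<in> idrel R" unfolding idrel_def using iX iY i1 by blast
      then show ?thesis unfolding p f_def by simp
    next
      case True
      then have ne: "X \<inter> sB \<noteq> Y \<inter> sB" using key by blast
      have "(X \<inter> sB, Y \<inter> sB) \<in> subrel R M sB" unfolding subrel_def
        using sub_Int[OF L X SB] sub_Int[OF L Y SB] ne i2 by blast
      then show ?thesis unfolding p f_def using True by simp
    qed
  qed
  have "wf (inv_image (idrel R <*lex*> subrel R M sB) f)"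
    using wf_inv_image wf_lex_prod wf_idrel[OF A] W unfolding sB_def by blast
  then show ?thesis using wf_subset sub by blast
qed

lemma art_span:
  assumes A: "left_artinian R" and L: "lmodule R M" and F: "finite C" and C: "C \<subseteq> carrier M"
  shows "wf (subrel R M (span R M C))"
  using F C
proof (induction C rule: finite_induct)
  case empty
  have "subrel R M (span R M {}) = {}"
    unfolding span_empty[OF L] subrel_def using sub_elim(2)[OF L] by blast
  then show ?case by simp
next
  case (insert a C)
  then show ?case using art_step[OF A L] by simp
qed

lemma art_fg:
  assumes A: "left_artinian R" and F: "fg_module R M"
  shows "wf (subrel R M (carrier M))"
proof -
  have L: "lmodule R M" using F unfolding fg_module_def by simp
  obtain C where "finite C" "C \<subseteq> carrier M" "span R M C = carrier M" using fg_span[OF F] by blast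
  then show ?thesis using art_span[OF A L] by metis
qed


lemma soc_sub: assumes L: "lmodule R N" shows "submodule (soc R N) R N"
  unfolding soc_def
proof (rule sub_Inter[OF L])
  have "carrier N \<in> {H. submodule H R N \<and> (\<forall>S. submodule S R N \<and> simple_module R (N\<lparr>carrier := S\<rparr>) \<longrightarrow> S \<subseteq> H)}"
    using sub_carrier[OF L] sub_elim(1)[OF L] by blast
  then show "{H. submodule H R N \<and> (\<forall>S. submodule S R N \<and> simple_module R (N\<lparr>carrier := S\<rparr>) \<longrightarrow> S \<subseteq> H)} \<noteq> {}" by blast
qed auto

lemma soc_ge: "submodule S R N \<Longrightarrow> simple_module R (N\<lparr>carrier := S\<rparr>) \<Longrightarrow> S \<subseteq> soc R N"
  unfolding soc_def by blast

lemma soc_least: "submodule H R N \<Longrightarrow> (\<And>S. submodule S R N \<Longrightarrow> simple_module R (N\<lparr>carrier := S\<rparr>) \<Longrightarrow> S \<subseteq> H)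
   \<Longrightarrow> soc R N \<subseteq> H"
  unfolding soc_def by blast

lemma simple_cases:
  assumes L: "lmodule R N" and S: "submodule S R N" and sim: "simple_module R (N\<lparr>carrier := S\<rparr>)"
    and Y: "submodule Y R N" "Y \<subseteq> S"
  shows "Y = {\<zero>\<^bsub>N\<^esub>} \<or> Y = S"
proof -
  have Y': "submodule Y R (N\<lparr>carrier := S\<rparr>)" using sub_restrict_iff[OF L S] Y by blast
  have all: "\<forall>Y. submodule Y R (N\<lparr>carrier := S\<rparr>) \<longrightarrow> Y = {\<zero>\<^bsub>N\<lparr>carrier := S\<rparr>\<^esub>} \<or> Y = carrier (N\<lparr>carrier := S\<rparr>)"
    using sim unfolding simple_module_def by (elim conjE)
  have "Y = {\<zero>\<^bsub>N\<lparr>carrier := S\<rparr>\<^esub>} \<or> Y = carrier (N\<lparr>carrier := S\<rparr>)" using all Y' by blast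
  moreover have "\<zero>\<^bsub>N\<lparr>carrier := S\<rparr>\<^esub> = \<zero>\<^bsub>N\<^esub>" by simp
  ultimately show ?thesis by simp
qed

lemma simple_ne: assumes "simple_module R (N\<lparr>carrier := S\<rparr>)" shows "S \<noteq> {\<zero>\<^bsub>N\<^esub>}"
proof -
  have "carrier (N\<lparr>carrier := S\<rparr>) \<noteq> {\<zero>\<^bsub>N\<lparr>carrier := S\<rparr>\<^esub>}" using assms unfolding simple_module_def by (elim conjE)
  moreover have "\<zero>\<^bsub>N\<lparr>carrier := S\<rparr>\<^esub> = \<zero>\<^bsub>N\<^esub>" by simp
  ultimately show ?thesis by simp
qed

lemma simple_span:
  assumes L: "lmodule R N" and S: "submodule S R N" and sim: "simple_module R (N\<lparr>carrier := S\<rparr>)"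
    and t: "t \<in> S" "t \<noteq> \<zero>\<^bsub>N\<^esub>"
  shows "span R N {t} = S"
proof -
  have tc: "{t} \<subseteq> carrier N" using sub_elim(1)[OF L S] t by blast
  have "span R N {t} \<subseteq> S" using span_least[OF S] t by blast
  moreover have "t \<in> span R N {t}" using span_inc[of "{t}" R N] by simp
  moreover have "span R N {t} = {\<zero>\<^bsub>N\<^esub>} \<or> span R N {t} = S"
    using simple_cases[OF L S sim span_sub[OF L tc] \<open>span R N {t} \<subseteq> S\<close>] .
  ultimately show ?thesis using t(2) by (metis singletonD)
qed

lemma exists_new:
  assumes L: "lmodule R N" and nfg: "\<not> fg_module R (N\<lparr>carrier := soc R N\<rparr>)"
    and F: "finite A" and A: "A \<subseteq> soc R N"
  shows "\<exists>t. t \<in> soc R N \<and> t \<notin> span R N A \<and> simple_module R (N\<lparr>carrier := span R N {t}\<rparr>)"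
proof -
  have Ss: "submodule (soc R N) R N" using soc_sub[OF L] .
  have Ac: "A \<subseteq> carrier N" using A sub_elim(1)[OF L Ss] by blast
  have SA: "submodule (span R N A) R N" using span_sub[OF L Ac] .
  have le: "span R N A \<subseteq> soc R N" using span_least[OF Ss A] .
  have ne: "span R N A \<noteq> soc R N" using fg_of_span[OF L F Ac] nfg by metis
  have "\<exists>S. submodule S R N \<and> simple_module R (N\<lparr>carrier := S\<rparr>) \<and> \<not> S \<subseteq> span R N A"
  proof (rule ccontr)
    assume "\<not> ?thesis"
    then have "soc R N \<subseteq> span R N A" using soc_least[OF SA] by blast
    then show False using le ne by blast
  qed
  then obtain S t where S: "submodule S R N" "simple_module R (N\<lparr>carrier := S\<rparr>)" "t \<in> S" "t \<notin> span R N A" by blast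
  have "t \<noteq> \<zero>\<^bsub>N\<^esub>" using S(4) sub_elim(2)[OF L SA] by blast
  then have "span R N {t} = S" using simple_span[OF L S(1,2) S(3)] by blast
  moreover have "t \<in> soc R N" using soc_ge[OF S(1,2)] S(3) by blast
  ultimately show ?thesis using S by auto
qed

primrec seqs :: "('m set \<Rightarrow> 'm) \<Rightarrow> nat \<Rightarrow> 'm list" where
  "seqs g 0 = []"
| "seqs g (Suc n) = seqs g n @ [g (set (seqs g n))]"

lemma set_seqs: "set (seqs g n) = (\<lambda>i. g (set (seqs g i))) ` {..<n}"
  by (induction n) (auto simp: lessThan_Suc)


lemma soc_fg:
  assumes A: "left_artinian R" and F: "fg_module R N"
  shows "fg_module R (N\<lparr>carrier := soc R N\<rparr>)"
proof (rule ccontr)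
  assume nfg: "\<not> ?thesis"
  have L: "lmodule R N" using F unfolding fg_module_def by simp
  interpret R: ring R using lmod_ring[OF L] .
  interpret MM: abelian_group N using lmod_ag[OF L] .
  have Ss: "submodule (soc R N) R N" using soc_sub[OF L] .
  have socc: "soc R N \<subseteq> carrier N" using sub_elim(1)[OF L Ss] .
  define P where "P A t \<longleftrightarrow> t \<in> soc R N \<and> t \<notin> span R N A \<and> simple_module R (N\<lparr>carrier := span R N {t}\<rparr>)" for A t
  define g where "g A = (SOME t. P A t)" for A
  define x where "x i = g (set (seqs g i))" for i
  have setx: "\<And>n. set (seqs g n) = x ` {..<n}" unfolding x_def by (rule set_seqs)
  have gP: "P A (g A)" if "finite A" "A \<subseteq> soc R N" for A
  proof -
    have "\<exists>t. P A t" unfolding P_def using exists_new[OF L nfg that] .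
    then show ?thesis unfolding g_def by (rule someI_ex)
  qed
  have inS: "set (seqs g n) \<subseteq> soc R N" for n
  proof (induction n)
    case 0 show ?case by simp
  next
    case (Suc n)
    have "P (set (seqs g n)) (g (set (seqs g n)))" using gP[OF finite_set Suc.IH] .
    then show ?case using Suc.IH unfolding P_def by simp
  qed
  have xP: "P (x ` {..<n}) (x n)" for n
  proof -
    have "x n = g (set (seqs g n))" by (rule x_def)
    also have "set (seqs g n) = x ` {..<n}" by (rule setx)
    finally have "x n = g (x ` {..<n})" .
    then show ?thesis using gP[OF finite_set inS[of n]] unfolding setx by simp
  qed
  have xS1: "x n \<in> soc R N" for n using xP[of n] unfolding P_def by simp
  have xS2: "x n \<notin> span R N (x ` {..<n})" for n using xP[of n] unfolding P_def by simp
  have xS3: "simple_module R (N\<lparr>carrier := span R N {x n}\<rparr>)" for n using xP[of n] unfolding P_def by simp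
  have xc: "x ` I \<subseteq> carrier N" for I using xS1 socc by blast
  have xnc: "x n \<in> carrier N" for n using xS1 socc by blast
  have SP: "submodule (span R N (x ` I)) R N" for I using span_sub[OF L xc] .
  have SPc: "span R N (x ` I) \<subseteq> carrier N" for I using span_carrier[OF L xc] .
  have T1: "submodule (span R N {x n}) R N" for n using span_sub[OF L] xnc by simp
  have xin: "x n \<in> span R N {x n}" for n using span_inc[of "{x n}" R N] by simp
  have indep0: "span R N {x n} \<inter> span R N (x ` {..<n}) = {\<zero>\<^bsub>N\<^esub>}" for n
  proof -
    have Q: "submodule (span R N {x n} \<inter> span R N (x ` {..<n})) R N" using sub_Int[OF L T1 SP] .
    have "span R N {x n} \<inter> span R N (x ` {..<n}) \<subseteq> span R N {x n}" by blast
    then have "span R N {x n} \<inter> span R N (x ` {..<n}) = {\<zero>\<^bsub>N\<^esub>} \<or> span R N {x n} \<inter> span R N (x ` {..<n}) = span R N {x n}"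
      using simple_cases[OF L T1 xS3 Q] by simp
    moreover have "span R N {x n} \<inter> span R N (x ` {..<n}) \<noteq> span R N {x n}"
      using xin[of n] xS2[of n] by blast
    ultimately show ?thesis by blast
  qed
  have indep: "\<forall>z. z \<in> span R N (x ` {..k}) \<and> z \<in> span R N (x ` {Suc k..<n}) \<longrightarrow> z = \<zero>\<^bsub>N\<^esub>" for k n
  proof (induction n)
    case 0
    show ?case using span_empty[OF L] by simp
  next
    case (Suc n)
    show ?case
    proof (intro allI impI)
      fix z assume zz: "z \<in> span R N (x ` {..k}) \<and> z \<in> span R N (x ` {Suc k..<Suc n})"
      show "z = \<zero>\<^bsub>N\<^esub>"
      proof (cases "n \<le> k")
        case True
        then have "{Suc k..<Suc n} = {}" by simp
        then show ?thesis using zz span_empty[OF L] by simp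
      next
        case False
        then have "x ` {Suc k..<Suc n} = insert (x n) (x ` {Suc k..<n})" by (simp add: atLeastLessThanSuc)
        then have "z \<in> span R N (insert (x n) (x ` {Suc k..<n}))" using zz by simp
        then obtain r y where ry: "r \<in> carrier R" "y \<in> span R N (x ` {Suc k..<n})" "z = r \<odot>\<^bsub>N\<^esub> x n \<oplus>\<^bsub>N\<^esub> y"
          unfolding span_insert[OF L xnc xc] by blast
        have wT: "r \<odot>\<^bsub>N\<^esub> x n \<in> span R N {x n}" using sub_elim(4)[OF L T1 ry(1) xin] .
        have "x ` {..k} \<subseteq> x ` {..<n}" using False by auto
        then have z1: "z \<in> span R N (x ` {..<n})" using zz span_mono by blast
        have "x ` {Suc k..<n} \<subseteq> x ` {..<n}" by auto
        then have y1: "y \<in> span R N (x ` {..<n})" using ry(2) span_mono by blast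
        have yc: "y \<in> carrier N" using ry(2) SPc by blast
        have wc: "r \<odot>\<^bsub>N\<^esub> x n \<in> carrier N" using smult_closed'[OF L ry(1) xnc] .
        have "r \<odot>\<^bsub>N\<^esub> x n = z \<oplus>\<^bsub>N\<^esub> \<ominus>\<^bsub>N\<^esub> y" unfolding ry(3) using yc wc by (simp add: MM.a_assoc MM.r_neg)
        then have "r \<odot>\<^bsub>N\<^esub> x n \<in> span R N (x ` {..<n})"
          using sub_elim(3)[OF L SP] sub_neg[OF L SP] z1 y1 by simp
        then have "r \<odot>\<^bsub>N\<^esub> x n = \<zero>\<^bsub>N\<^esub>" using wT indep0[of n] by blast
        then have "z = y" unfolding ry(3) using yc by simp
        then show ?thesis using Suc.IH zz ry(2) by blast
      qed
    qed
  qed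
  define W where "W k = span R N (x ` {k..})" for k
  have WS: "submodule (W k) R N" for k unfolding W_def by (rule SP)
  have Wc: "W k \<subseteq> carrier N" for k unfolding W_def by (rule SPc)
  have notin: "x k \<notin> W (Suc k)" for k
  proof
    assume xk: "x k \<in> W (Suc k)"
    define U where "U = (\<Union>n. span R N (x ` {Suc k..<n}))"
    have mono2: "span R N (x ` {Suc k..<n}) \<subseteq> span R N (x ` {Suc k..<max n m})" for n m
      by (rule span_mono) auto
    have mono3: "span R N (x ` {Suc k..<m}) \<subseteq> span R N (x ` {Suc k..<max n m})" for n m
      by (rule span_mono) auto
    have U: "submodule U R N"
    proof (rule sub_intro[OF L])
      show "U \<subseteq> carrier N" unfolding U_def using SPc by (intro UN_least) auto
      have "\<zero>\<^bsub>N\<^esub> \<in> span R N (x ` {Suc k..<0})" by (rule sub_elim(2)[OF L SP])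
      then show "\<zero>\<^bsub>N\<^esub> \<in> U" unfolding U_def by (rule UN_I[OF UNIV_I])
      show "a \<oplus>\<^bsub>N\<^esub> b \<in> U" if h: "a \<in> U" "b \<in> U" for a b
      proof -
        obtain n where n: "a \<in> span R N (x ` {Suc k..<n})" using h(1) unfolding U_def by (elim UN_E)
        obtain m where m: "b \<in> span R N (x ` {Suc k..<m})" using h(2) unfolding U_def by (elim UN_E)
        have "a \<in> span R N (x ` {Suc k..<max n m})" using mono2[of n m] n by (rule subsetD)
        moreover have "b \<in> span R N (x ` {Suc k..<max n m})" using mono3[of m n] m by (rule subsetD)
        ultimately have "a \<oplus>\<^bsub>N\<^esub> b \<in> span R N (x ` {Suc k..<max n m})"
          by (rule sub_elim(3)[OF L SP])
        then show ?thesis unfolding U_def by (rule UN_I[OF UNIV_I])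
      qed
      show "r \<odot>\<^bsub>N\<^esub> a \<in> U" if h: "r \<in> carrier R" "a \<in> U" for r a
      proof -
        obtain n where n: "a \<in> span R N (x ` {Suc k..<n})" using h(2) unfolding U_def by (elim UN_E)
        have "r \<odot>\<^bsub>N\<^esub> a \<in> span R N (x ` {Suc k..<n})" using sub_elim(4)[OF L SP h(1) n] .
        then show ?thesis unfolding U_def by (rule UN_I[OF UNIV_I])
      qed
    qed
    have "x ` {Suc k..} \<subseteq> U"
    proof
      fix v assume "v \<in> x ` {Suc k..}"
      then obtain i where i: "i \<ge> Suc k" "v = x i" by auto
      have "x i \<in> x ` {Suc k..<Suc i}" using i(1) by auto
      then have "x i \<in> span R N (x ` {Suc k..<Suc i})" by (rule subsetD[OF span_inc[of "x ` {Suc k..<Suc i}" R N]])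
      then show "v \<in> U" unfolding U_def i(2) by (rule UN_I[OF UNIV_I])
    qed
    then have "W (Suc k) \<subseteq> U" unfolding W_def by (rule span_least[OF U])
    then have "x k \<in> U" using xk by (rule subsetD)
    then obtain n where n: "x k \<in> span R N (x ` {Suc k..<n})" unfolding U_def by (elim UN_E)
    have "x k \<in> x ` {..k}" by simp
    then have "x k \<in> span R N (x ` {..k})" by (rule subsetD[OF span_inc[of "x ` {..k}" R N]])
    then have "x k = \<zero>\<^bsub>N\<^esub>" using indep[of k n] n by simp
    moreover have "\<zero>\<^bsub>N\<^esub> \<in> span R N (x ` {..<k})" using sub_elim(2)[OF L SP] .
    ultimately show False using xS2[of k] by simp
  qed
  have chain: "(W (Suc k), W k) \<in> subrel R N (carrier N)" for k
  proof -
    have le: "W (Suc k) \<subseteq> W k" unfolding W_def by (rule span_mono) auto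
    have "x k \<in> x ` {k..}" by simp
    then have "x k \<in> W k" unfolding W_def by (rule subsetD[OF span_inc[of "x ` {k..}" R N]])
    then have "W (Suc k) \<subset> W k" using le notin[of k] by (metis psubsetI)
    then show ?thesis unfolding subrel_def using WS[of k] WS[of "Suc k"] Wc[of k] by simp
  qed
  then have "\<exists>f. \<forall>i. (f (Suc i), f i) \<in> subrel R N (carrier N)" by blast
  then show False using art_fg[OF A F] wf_iff_no_infinite_down_chain by metis
qed


lemma incl_hom1: "X \<subseteq> Y \<Longrightarrow> (\<lambda>v. v) \<in> lmod_hom R (N\<lparr>carrier := X\<rparr>) (N\<lparr>carrier := Y\<rparr>)"
  unfolding lmod_hom_def by auto

lemma incl_hom2: "X \<subseteq> carrier N \<Longrightarrow> (\<lambda>v. v) \<in> lmod_hom R (N\<lparr>carrier := X\<rparr>) N"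
  unfolding lmod_hom_def by auto

theorem lemma2p2:
  fixes R :: "('a, 'r) ring_scheme"
    and \<alpha> \<beta> :: "('a, 'm) module \<Rightarrow> 'm set"
  assumes "left_artinian R"
    and "radical R \<beta>"
    and "preradical R \<alpha>"
    and "torsionfree_class R \<alpha> \<subseteq> torsion_class R \<beta>"
    and "fg_module R M"
    and "is_quotient_by R M (\<beta> M) N p"
  shows "N\<lparr>carrier := soc R N\<rparr> \<in> torsion_class R \<alpha> \<inter> torsionfree_class R \<beta>"
proof -
  have FN: "fg_module R N" using assms(6) unfolding is_quotient_by_def by simp
  have L: "lmodule R N" using FN unfolding fg_module_def by simp
  have radb: "\<forall>M N p. fg_module R M \<and> is_quotient_by R M (\<beta> M) N p \<longrightarrow> \<beta> N = {\<zero>\<^bsub>N\<^esub>}"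
    using assms(2) unfolding radical_def by simp
  have bN: "\<beta> N = {\<zero>\<^bsub>N\<^esub>}" using radb assms(5,6) by blast
  have prb: "preradical R \<beta>" using assms(2) unfolding radical_def by simp
  have bsub: "\<forall>M. fg_module R M \<longrightarrow> submodule (\<beta> M) R M" using prb unfolding preradical_def by simp
  have bhom: "\<forall>M N f. fg_module R M \<and> fg_module R N \<and> f \<in> lmod_hom R M N \<longrightarrow> f ` \<beta> M \<subseteq> \<beta> N"
    using prb unfolding preradical_def by simp
  have asub: "\<forall>M. fg_module R M \<longrightarrow> submodule (\<alpha> M) R M" using assms(3) unfolding preradical_def by simp
  have ahom: "\<forall>M N f. fg_module R M \<and> fg_module R N \<and> f \<in> lmod_hom R M N \<longrightarrow> f ` \<alpha> M \<subseteq> \<alpha> N"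
    using assms(3) unfolding preradical_def by simp
  define S where "S = soc R N"
  have SS: "submodule S R N" unfolding S_def using soc_sub[OF L] .
  have Sc: "S \<subseteq> carrier N" using sub_elim(1)[OF L SS] .
  have FS: "fg_module R (N\<lparr>carrier := S\<rparr>)" unfolding S_def using soc_fg[OF assms(1) FN] .
  have z: "\<zero>\<^bsub>N\<lparr>carrier := X\<rparr>\<^esub> = \<zero>\<^bsub>N\<^esub>" for X by simp
  have "(\<lambda>v. v) ` \<beta> (N\<lparr>carrier := S\<rparr>) \<subseteq> \<beta> N" using bhom FS FN incl_hom2[OF Sc] by blast
  then have b1: "\<beta> (N\<lparr>carrier := S\<rparr>) \<subseteq> {\<zero>\<^bsub>N\<^esub>}" using bN by simp
  have "submodule (\<beta> (N\<lparr>carrier := S\<rparr>)) R (N\<lparr>carrier := S\<rparr>)" using bsub FS by blast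
  then have "\<zero>\<^bsub>N\<^esub> \<in> \<beta> (N\<lparr>carrier := S\<rparr>)" using sub_elim(2)[OF lmodule_restrict[OF L SS]] z by metis
  then have bS: "\<beta> (N\<lparr>carrier := S\<rparr>) = {\<zero>\<^bsub>N\<lparr>carrier := S\<rparr>\<^esub>}" using b1 by auto
  define Aa where "Aa = \<alpha> (N\<lparr>carrier := S\<rparr>)"
  have "submodule Aa R (N\<lparr>carrier := S\<rparr>)" unfolding Aa_def using asub FS by blast
  then have AaS: "submodule Aa R N" and AaleS: "Aa \<subseteq> S" using sub_restrict_iff[OF L SS] by auto
  have aS: "Aa = S"
  proof (rule ccontr)
    assume ne: "Aa \<noteq> S"
    have "\<exists>T. submodule T R N \<and> simple_module R (N\<lparr>carrier := T\<rparr>) \<and> \<not> T \<subseteq> Aa"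
    proof (rule ccontr)
      assume "\<not> ?thesis"
      then have "S \<subseteq> Aa" unfolding S_def using soc_least[OF AaS] by blast
      then show False using ne AaleS by blast
    qed
    then obtain T t where T: "submodule T R N" "simple_module R (N\<lparr>carrier := T\<rparr>)" "t \<in> T" "t \<notin> Aa" by blast
    have t0: "t \<noteq> \<zero>\<^bsub>N\<^esub>" using T(4) sub_elim(2)[OF L AaS] by blast
    have spT: "span R N {t} = T" using simple_span[OF L T(1,2) T(3) t0] .
    have tc: "{t} \<subseteq> carrier N" using sub_elim(1)[OF L T(1)] T(3) by blast
    have FT: "fg_module R (N\<lparr>carrier := T\<rparr>)" using fg_of_span[OF L _ tc] spT by simp
    have TS: "T \<subseteq> S" unfolding S_def using soc_ge[OF T(1,2)] .
    have Tc: "T \<subseteq> carrier N" using sub_elim(1)[OF L T(1)] .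
    have "(\<lambda>v. v) ` \<alpha> (N\<lparr>carrier := T\<rparr>) \<subseteq> Aa" unfolding Aa_def using ahom FT FS incl_hom1[OF TS] by blast
    then have a1: "\<alpha> (N\<lparr>carrier := T\<rparr>) \<subseteq> Aa" by simp
    have "submodule (\<alpha> (N\<lparr>carrier := T\<rparr>)) R (N\<lparr>carrier := T\<rparr>)" using asub FT by blast
    then have aT: "submodule (\<alpha> (N\<lparr>carrier := T\<rparr>)) R N" "\<alpha> (N\<lparr>carrier := T\<rparr>) \<subseteq> T"
      using sub_restrict_iff[OF L T(1)] by auto
    have I: "submodule (T \<inter> Aa) R N" using sub_Int[OF L T(1) AaS] .
    have "T \<inter> Aa = {\<zero>\<^bsub>N\<^esub>} \<or> T \<inter> Aa = T" using simple_cases[OF L T(1,2) I] by blast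
    moreover have "T \<inter> Aa \<noteq> T" using T(3,4) by blast
    ultimately have TA: "T \<inter> Aa = {\<zero>\<^bsub>N\<^esub>}" by blast
    have "\<zero>\<^bsub>N\<^esub> \<in> \<alpha> (N\<lparr>carrier := T\<rparr>)" using sub_elim(2)[OF L aT(1)] .
    then have "\<alpha> (N\<lparr>carrier := T\<rparr>) = {\<zero>\<^bsub>N\<lparr>carrier := T\<rparr>\<^esub>}" using a1 aT(2) TA by auto
    then have "N\<lparr>carrier := T\<rparr> \<in> torsionfree_class R \<alpha>" unfolding torsionfree_class_def using FT by simp
    then have "N\<lparr>carrier := T\<rparr> \<in> torsion_class R \<beta>" using assms(4) by blast
    then have bT: "\<beta> (N\<lparr>carrier := T\<rparr>) = T" unfolding torsion_class_def by simp
    have "(\<lambda>v. v) ` \<beta> (N\<lparr>carrier := T\<rparr>) \<subseteq> \<beta> N" using bhom FT FN incl_hom2[OF Tc] by blast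
    then have "T \<subseteq> {\<zero>\<^bsub>N\<^esub>}" using bN bT by simp
    then have "T = {\<zero>\<^bsub>N\<^esub>}" using T(3) t0 by blast
    then show False using simple_ne[OF T(2)] by simp
  qed
  have "N\<lparr>carrier := S\<rparr> \<in> torsion_class R \<alpha>" unfolding torsion_class_def using FS aS Aa_def by simp
  moreover have "N\<lparr>carrier := S\<rparr> \<in> torsionfree_class R \<beta>" unfolding torsionfree_class_def using FS bS by simp
  ultimately show ?thesis unfolding S_def by blast
qed

end
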